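(* Let $G$ be a connected split graph whose vertex set is partitioned into a clique of order $r$ and an independent set of order $s$. Then for every integer $t\ge 3$, $\varphi(G^t)=\frac{1}{2}(r+s-1)(r+s-2)$.
   Context: All graphs are finite, simple and without isolated vertices. $\mathbb{N}_0$ denotes the set of non-negative integers; for finite $A,B\subseteq\mathbb{N}_0$, $A+B=\{a+b: a\in A, b\in B\}$. An integer additive set-indexer (IASI) of a graph $G$ is an injective map $f$ from $V(G)$ to the finite non-empty subsets of $\mathbb{N}_0$ such that the induced edge map $f^+(uv)=f(u)+f(v)$ is injective on $E(G)$. A weak IASI (WIASI) is an IASI $f$ with $|f^+(uv)|=\max(|f(u)|,|f(v)|)$ for every edge $uv$ (equivalently, for every edge at least one end vertex has a singleton label). A vertex or edge is mono-indexed if its set-label has cardinality $1$. Every graph admits a WIASI. The sparing number $\varphi(G)$ is the minimum, over all WIASIs of $G$, of the number of mono-indexed edges of $G$. The $t$-th power $G^t$ has vertex set $V(G)$, two distinct vertices being adjacent iff their distance in $G$ is at most $t$. A split graph is a graph whose vertex set can be partitioned into a clique and an independent set. *)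

theory Defs
  imports Complex_Main
begin

definition graph :: "'a set \<Rightarrow> 'a set set \<Rightarrow> bool" where
  "graph V E \<longleftrightarrow> finite V
     \<and> (\<forall>e\<in>E. \<exists>u v. u \<noteq> v \<and> u \<in> V \<and> v \<in> V \<and> e = {u, v})
     \<and> (\<forall>v\<in>V. \<exists>e\<in>E. v \<in> e)"

definition walk :: "'a set set \<Rightarrow> 'a list \<Rightarrow> bool" where
  "walk E xs \<longleftrightarrow> xs \<noteq> [] \<and> (\<forall>i. Suc i < length xs \<longrightarrow> {xs ! i, xs ! Suc i} \<in> E)"

definition dist_le :: "'a set set \<Rightarrow> 'a \<Rightarrow> 'a \<Rightarrow> nat \<Rightarrow> bool" where
  "dist_le E u v k \<longleftrightarrow> (\<exists>xs. walk E xs \<and> hd xs = u \<and> last xs = v \<and> length xs \<le> Suc k)"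

definition connected_graph :: "'a set \<Rightarrow> 'a set set \<Rightarrow> bool" where
  "connected_graph V E \<longleftrightarrow> V \<noteq> {} \<and> (\<forall>u\<in>V. \<forall>v\<in>V. \<exists>k. dist_le E u v k)"

definition graph_power :: "'a set \<Rightarrow> 'a set set \<Rightarrow> nat \<Rightarrow> 'a set set" where
  "graph_power V E t = {{u, v} | u v. u \<in> V \<and> v \<in> V \<and> u \<noteq> v \<and> dist_le E u v t}"

definition is_split_partition :: "'a set \<Rightarrow> 'a set set \<Rightarrow> 'a set \<Rightarrow> 'a set \<Rightarrow> bool" where
  "is_split_partition V E K I \<longleftrightarrow> K \<union> I = V \<and> K \<inter> I = {}
     \<and> (\<forall>u\<in>K. \<forall>v\<in>K. u \<noteq> v \<longrightarrow> {u, v} \<in> E)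
     \<and> (\<forall>u\<in>I. \<forall>v\<in>I. {u, v} \<notin> E)"

definition sumset :: "nat set \<Rightarrow> nat set \<Rightarrow> nat set" where
  "sumset A B = {a + b | a b. a \<in> A \<and> b \<in> B}"

definition IASI :: "'a set \<Rightarrow> 'a set set \<Rightarrow> ('a \<Rightarrow> nat set) \<Rightarrow> bool" where
  "IASI V E f \<longleftrightarrow> inj_on f V
     \<and> (\<forall>v\<in>V. finite (f v) \<and> f v \<noteq> {})
     \<and> (\<forall>u v x y. {u, v} \<in> E \<longrightarrow> {x, y} \<in> E \<longrightarrow>
           sumset (f u) (f v) = sumset (f x) (f y) \<longrightarrow> {u, v} = {x, y})"

definition WIASI :: "'a set \<Rightarrow> 'a set set \<Rightarrow> ('a \<Rightarrow> nat set) \<Rightarrow> bool" where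
  "WIASI V E f \<longleftrightarrow> IASI V E f
     \<and> (\<forall>u v. {u, v} \<in> E \<longrightarrow> card (sumset (f u) (f v)) = max (card (f u)) (card (f v)))"

definition mono_edges :: "'a set set \<Rightarrow> ('a \<Rightarrow> nat set) \<Rightarrow> 'a set set" where
  "mono_edges E f = {e \<in> E. \<exists>u v. e = {u, v} \<and> card (sumset (f u) (f v)) = 1}"

definition sparing_number :: "'a set \<Rightarrow> 'a set set \<Rightarrow> nat" where
  "sparing_number V E = (LEAST n. \<exists>f. WIASI V E f \<and> card (mono_edges E f) = n)"

end

theory Submission
  imports Defs
begin

lemma sumset_sing: "sumset {a} {b} = {a+b}"
  unfolding sumset_def by auto

lemma sumset_comm: "sumset A B = sumset B A"
proof -
  have "\<And>A B. sumset A B \<subseteq> sumset B A"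
    unfolding sumset_def by (smt (verit) Collect_mono_iff add.commute)
  thus ?thesis by (simp add: subset_antisym)
qed

lemma sumset_01: "sumset {0,1} {b} = {b, Suc b}"
  unfolding sumset_def by auto

lemma sumset_01': "sumset {b} {0,1} = {b, Suc b}"
  unfolding sumset_def by auto

lemma sumset_01s: "sumset {0, Suc 0} {b} = {b, Suc b}" "sumset {b} {0, Suc 0} = {b, Suc b}"
  using sumset_01[of b] sumset_01'[of b] by simp_all

lemma sumset_finite: "finite A \<Longrightarrow> finite B \<Longrightarrow> finite (sumset A B)"
proof -
  assume "finite A" "finite B"
  have "sumset A B = (\<lambda>(x,y). x+y) ` (A \<times> B)" unfolding sumset_def by force
  thus ?thesis using \<open>finite A\<close> \<open>finite B\<close> by simp
qed

lemma card_sumset_gt: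
  assumes A: "finite A" "card A \<ge> 2" and B: "finite B" "B \<noteq> {}"
  shows "card (sumset A B) > card B"
proof -
  have Ane: "A \<noteq> {}" using A by auto
  define a where "a = Min A"
  define a' where "a' = Max A"
  have aA: "a \<in> A" and a'A: "a' \<in> A" using A Ane a_def a'_def by auto
  have le1: "\<And>x. x \<in> A \<Longrightarrow> a \<le> x" using A(1) a_def by simp
  have le2: "\<And>x. x \<in> A \<Longrightarrow> x \<le> a'" using A(1) a'_def by simp
  have "a \<noteq> a'"
  proof
    assume "a = a'"
    hence "A \<subseteq> {a}" using le1 le2 by force
    hence "card A \<le> card {a}" by (intro card_mono) auto
    hence "card A \<le> 1" by simp
    thus False using A by simp
  qed
  hence lt: "a < a'" using le1 a'A by force
  define b where "b = Max B"
  have bB: "b \<in> B" using B b_def by auto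
  have sub: "insert (a' + b) ((+) a ` B) \<subseteq> sumset A B"
    unfolding sumset_def using aA a'A bB by auto
  have notin: "a' + b \<notin> (+) a ` B"
  proof
    assume "a' + b \<in> (+) a ` B"
    then obtain x where "x \<in> B" "a' + b = a + x" by auto
    moreover have "x \<le> b" using \<open>x \<in> B\<close> B b_def by auto
    ultimately show False using lt by linarith
  qed
  have "card (insert (a' + b) ((+) a ` B)) = Suc (card B)"
    using notin B by (simp add: card_image inj_on_def)
  moreover have "card (insert (a' + b) ((+) a ` B)) \<le> card (sumset A B)"
    using sub sumset_finite[OF A(1) B(1)] by (rule card_mono[rotated])
  ultimately show ?thesis by simp
qed

lemma pow2_lt: "(i::nat) < j \<Longrightarrow> (2::nat)^i + 2^j < 2^(Suc j)"
proof -
  assume "i < j"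
  hence "(2::nat)^i < 2^j" by simp
  thus ?thesis by simp
qed

lemma pow2_pair:
  assumes "(i::nat) \<noteq> j" "k \<noteq> l" "(2::nat)^i + 2^j = 2^k + 2^l"
  shows "{i,j} = {k,l}"
proof -
  have key: "max i j = max k l"
  proof (rule ccontr)
    assume ne: "max i j \<noteq> max k l"
    have A: "(2::nat)^i + 2^j < 2^(Suc (max i j))"
      using pow2_lt[of "min i j" "max i j"] assms(1)
      by (cases "i < j") (auto simp: max_def min_def add.commute)
    have B: "(2::nat)^k + 2^l < 2^(Suc (max k l))"
      using pow2_lt[of "min k l" "max k l"] assms(2)
      by (cases "k < l") (auto simp: max_def min_def add.commute)
    have A2: "(2::nat)^(max i j) \<le> 2^i + 2^j" by (simp add: max_def)
    have B2: "(2::nat)^(max k l) \<le> 2^k + 2^l" by (simp add: max_def)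
    show False
    proof (cases "max i j < max k l")
      case True
      hence "(2::nat)^(Suc (max i j)) \<le> 2^(max k l)" by (intro power_increasing) auto
      thus False using A B2 assms(3) by linarith
    next
      case False
      hence "max k l < max i j" using ne by linarith
      hence "(2::nat)^(Suc (max k l)) \<le> 2^(max i j)" by (intro power_increasing) auto
      thus False using B A2 assms(3) by linarith
    qed
  qed
  have "min i j = min k l"
  proof -
    have "(2::nat)^(min i j) + 2^(max i j) = 2^i + 2^j" by (simp add: min_def max_def)
    moreover have "(2::nat)^(min k l) + 2^(max k l) = 2^k + 2^l" by (simp add: min_def max_def)
    ultimately have "(2::nat)^(min i j) = 2^(min k l)" using key assms(3) by (metis add_right_cancel)
    thus ?thesis by simp
  qed
  thus ?thesis using key by (auto simp: min_def max_def split: if_splits)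
qed

definition KE :: "'a set \<Rightarrow> 'a set set" where
  "KE V = {{u,v} | u v. u \<in> V \<and> v \<in> V \<and> u \<noteq> v}"

lemma walk_two: "walk E [a,b] \<longleftrightarrow> {a,b} \<in> E"
  unfolding walk_def by (auto simp: less_Suc_eq)

lemma walk_Cons2: "walk E (x#y#xs) \<longleftrightarrow> {x,y} \<in> E \<and> walk E (y#xs)"
proof
  assume "walk E (x#y#xs)"
  thus "{x,y} \<in> E \<and> walk E (y#xs)" unfolding walk_def
    by (metis Suc_less_eq length_Cons list.discI nth_Cons_0 nth_Cons_Suc zero_less_Suc)
next
  assume h: "{x,y} \<in> E \<and> walk E (y#xs)"
  show "walk E (x#y#xs)" unfolding walk_def
  proof (intro conjI allI impI)
    fix i assume "Suc i < length (x#y#xs)"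
    show "{(x#y#xs) ! i, (x#y#xs) ! Suc i} \<in> E"
    proof (cases i)
      case 0 thus ?thesis using h by simp
    next
      case (Suc j) thus ?thesis using h \<open>Suc i < length (x#y#xs)\<close> unfolding walk_def by simp
    qed
  qed simp
qed

lemma walk_one: "walk E [a]"
  unfolding walk_def by simp

lemma dl2: "{a,b} \<in> E \<Longrightarrow> t \<ge> 3 \<Longrightarrow> dist_le E a b t"
  unfolding dist_le_def by (rule exI[of _ "[a,b]"]) (simp add: walk_two)

lemma dl3: "{a,b} \<in> E \<Longrightarrow> {b,c} \<in> E \<Longrightarrow> t \<ge> 3 \<Longrightarrow> dist_le E a c t"
  unfolding dist_le_def by (rule exI[of _ "[a,b,c]"]) (simp add: walk_one walk_Cons2)

lemma dl4: "{a,b} \<in> E \<Longrightarrow> {b,c} \<in> E \<Longrightarrow> {c,d} \<in> E \<Longrightarrow> t \<ge> 3 \<Longrightarrow> dist_le E a d t"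
  unfolding dist_le_def by (rule exI[of _ "[a,b,c,d]"]) (simp add: walk_one walk_Cons2)

lemma nbr:
  assumes "graph V E" "is_split_partition V E K I" "u \<in> I"
  shows "\<exists>k\<in>K. {u,k} \<in> E"
proof -
  have P: "K \<union> I = V" "\<forall>u\<in>I. \<forall>v\<in>I. {u, v} \<notin> E"
    using assms(2) unfolding is_split_partition_def by auto
  have uV: "u \<in> V" using P(1) assms(3) by blast
  have G: "\<forall>e\<in>E. \<exists>u v. u \<noteq> v \<and> u \<in> V \<and> v \<in> V \<and> e = {u, v}" "\<forall>v\<in>V. \<exists>e\<in>E. v \<in> e"
    using assms(1) unfolding graph_def by auto
  obtain e where e: "e \<in> E" "u \<in> e" using G(2) uV by blast
  obtain x y where xy: "x \<noteq> y" "x \<in> V" "y \<in> V" "e = {x,y}" using G(1) e(1) by blast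
  obtain w where w: "w \<in> V" "e = {u,w}"
  proof (cases "u = x")
    case True thus ?thesis using that xy by blast
  next
    case False hence "u = y" using e xy by blast
    thus ?thesis using that xy by (metis insert_commute)
  qed
  have "w \<notin> I" using P(2) assms(3) w e by metis
  hence "w \<in> K" using w P(1) by blast
  thus ?thesis using w e by blast
qed

lemma power_complete:
  assumes "graph V E" "is_split_partition V E K I" "t \<ge> 3"
  shows "graph_power V E t = KE V"
proof
  show "graph_power V E t \<subseteq> KE V"
  proof
    fix e assume "e \<in> graph_power V E t"
    then obtain u v where "e = {u,v}" "u \<in> V" "v \<in> V" "u \<noteq> v" unfolding graph_power_def by blast
    thus "e \<in> KE V" unfolding KE_def by blast
  qed
next
  have P: "K \<union> I = V" "K \<inter> I = {}" "\<forall>u\<in>K. \<forall>v\<in>K. u \<noteq> v \<longrightarrow> {u, v} \<in> E"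
    using assms(2) unfolding is_split_partition_def by auto
  have sym: "\<And>a b. {a,b} = {b,a}" by auto
  have d: "dist_le E u v t" if uV: "u \<in> V" "v \<in> V" "u \<noteq> v" for u v
  proof -
    consider "u \<in> K" "v \<in> K" | "u \<in> I" "v \<in> K" | "u \<in> K" "v \<in> I" | "u \<in> I" "v \<in> I"
      using P(1) uV(1,2) by blast
    thus ?thesis
    proof cases
      case 1 hence "{u,v} \<in> E" using P(3) uV(3) by simp
      thus ?thesis by (rule dl2[OF _ assms(3)])
    next
      case 2
      then obtain k where k: "k \<in> K" "{u,k} \<in> E" using nbr[OF assms(1,2)] by blast
      show ?thesis
      proof (cases "k = v")
        case True thus ?thesis using dl2[OF k(2) assms(3)] by simp
      next
        case False
        hence "{k,v} \<in> E" using P(3) k(1) 2 by blast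
        thus ?thesis by (rule dl3[OF k(2) _ assms(3)])
      qed
    next
      case 3
      then obtain k where k: "k \<in> K" "{v,k} \<in> E" using nbr[OF assms(1,2)] by blast
      have k': "{k,v} \<in> E" using k sym by metis
      show ?thesis
      proof (cases "k = u")
        case True thus ?thesis using dl2[OF k' assms(3)] by simp
      next
        case False
        hence "u \<noteq> k" by simp
        hence "{u,k} \<in> E" using P(3) k(1) 3(1) by simp
        thus ?thesis by (rule dl3[OF _ k' assms(3)])
      qed
    next
      case 4
      then obtain k where k: "k \<in> K" "{u,k} \<in> E" using nbr[OF assms(1,2)] by blast
      obtain k2 where k2: "k2 \<in> K" "{v,k2} \<in> E" using nbr[OF assms(1,2)] 4 by blast
      have k2': "{k2,v} \<in> E" using k2 sym by metis
      show ?thesis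
      proof (cases "k = k2")
        case True thus ?thesis using dl3[OF k(2) _ assms(3)] k2' by simp
      next
        case False
        hence "{k,k2} \<in> E" using P(3) k(1) k2(1) by blast
        thus ?thesis by (rule dl4[OF k(2) _ k2' assms(3)])
      qed
    qed
  qed
  show "KE V \<subseteq> graph_power V E t"
  proof
    fix e assume "e \<in> KE V"
    then obtain u v where uv: "e = {u,v}" "u \<in> V" "v \<in> V" "u \<noteq> v" unfolding KE_def by blast
    hence "dist_le E u v t" using d by blast
    thus "e \<in> graph_power V E t" unfolding graph_power_def using uv by blast
  qed
qed

lemma KE_mem: "{u,v} \<in> KE V \<longleftrightarrow> u \<in> V \<and> v \<in> V \<and> u \<noteq> v"
  unfolding KE_def by (auto simp: doubleton_eq_iff)

lemma KE_sub: "KE V \<subseteq> Pow V"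
  unfolding KE_def by auto

lemma card_sing1: "card A = 1 \<Longrightarrow> card B = 1 \<Longrightarrow> card (sumset A B) = 1"
  by (auto simp: card_1_singleton_iff sumset_sing)

lemma lower:
  assumes V: "finite V" and W: "WIASI V (KE V) f"
  shows "(card V - 1) choose 2 \<le> card (mono_edges (KE V) f)"
proof -
  have I: "IASI V (KE V) f" and Wk: "\<forall>u v. {u, v} \<in> KE V \<longrightarrow> card (sumset (f u) (f v)) = max (card (f u)) (card (f v))"
    using W unfolding WIASI_def by auto
  have fin: "\<And>v. v \<in> V \<Longrightarrow> finite (f v) \<and> f v \<noteq> {}" using I unfolding IASI_def by auto
  define S where "S = {v \<in> V. card (f v) = 1}"
  have SV: "S \<subseteq> V" unfolding S_def by auto
  have "card (V - S) \<le> Suc 0"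
  proof (subst card_le_Suc0_iff_eq)
    show "finite (V - S)" using V by simp
    show "\<forall>x\<in>V - S. \<forall>y\<in>V - S. x = y"
    proof (intro ballI, rule ccontr)
      fix x y assume x: "x \<in> V - S" and y: "y \<in> V - S" and ne: "x \<noteq> y"
      have cx: "card (f x) \<ge> 2" using x fin[of x] unfolding S_def
        by (metis (mono_tags, lifting) DiffD1 DiffD2 One_nat_def card_0_eq le_less_linear less_2_cases mem_Collect_eq)
      have cy: "card (f y) \<ge> 2" using y fin[of y] unfolding S_def
        by (metis (mono_tags, lifting) DiffD1 DiffD2 One_nat_def card_0_eq le_less_linear less_2_cases mem_Collect_eq)
      have e: "{x,y} \<in> KE V" using x y ne by (simp add: KE_mem)
      have 1: "card (sumset (f x) (f y)) > card (f y)"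
        using card_sumset_gt[of "f x" "f y"] cx fin x y by blast
      have 2: "card (sumset (f y) (f x)) > card (f x)"
        using card_sumset_gt[of "f y" "f x"] cy fin x y by blast
      have 3: "card (sumset (f x) (f y)) = max (card (f x)) (card (f y))" using Wk e by blast
      show False using 1 2 3 sumset_comm[of "f y" "f x"]
        by (cases "card (f x) \<le> card (f y)") (simp_all add: max_def)
    qed
  qed
  moreover have "card V = card S + card (V - S)"
  proof -
    have "finite S" using V SV finite_subset by blast
    hence "card (V - S) = card V - card S" using card_Diff_subset SV by blast
    moreover have "card S \<le> card V" using V SV card_mono by blast
    ultimately show ?thesis by linarith
  qed
  ultimately have cS: "card V - 1 \<le> card S" by linarith
  have sub: "{B. B \<subseteq> S \<and> card B = 2} \<subseteq> mono_edges (KE V) f"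
  proof
    fix B assume "B \<in> {B. B \<subseteq> S \<and> card B = 2}"
    then obtain x y where B: "B = {x,y}" "x \<noteq> y" "x \<in> S" "y \<in> S" by (auto simp: card_2_iff)
    hence "B \<in> KE V" using SV by (auto simp: KE_mem)
    moreover have "card (sumset (f x) (f y)) = 1" using B(3,4) card_sing1 unfolding S_def by simp
    ultimately show "B \<in> mono_edges (KE V) f" unfolding mono_edges_def using B(1) by blast
  qed
  have finM: "finite (mono_edges (KE V) f)"
  proof (rule finite_subset)
    show "mono_edges (KE V) f \<subseteq> Pow V" using KE_sub unfolding mono_edges_def by blast
    show "finite (Pow V)" using V by simp
  qed
  have "(card V - 1) choose 2 \<le> card S choose 2" using cS by (rule binomial_right_mono)
  also have "\<dots> = card {B. B \<subseteq> S \<and> card B = 2}" using n_subsets[of S 2] finite_subset[OF SV V] by simp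
  also have "\<dots> \<le> card (mono_edges (KE V) f)" by (rule card_mono[OF finM sub])
  finally show ?thesis .
qed

lemma key_inj:
  assumes "inj_on g V" "u \<in> V" "v \<in> V" "x \<in> V" "y \<in> V" "u \<noteq> v" "x \<noteq> y"
    "(2::nat)^(g u) + 2^(g v) = 2^(g x) + 2^(g y)"
  shows "{u,v} = {x,y}"
proof -
  have "g u \<noteq> g v" using assms(1,2,3,6) by (simp add: inj_on_eq_iff)
  moreover have "g x \<noteq> g y" using assms(1,4,5,7) by (simp add: inj_on_eq_iff)
  ultimately have "{g u, g v} = {g x, g y}" using pow2_pair assms(8) by blast
  hence "g ` {u,v} = g ` {x,y}" by simp
  thus ?thesis by (subst (asm) inj_on_image_eq_iff[OF assms(1)]) (use assms(2-5) in auto)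
qed

lemma construct:
  assumes V: "finite V" and v0: "v0 \<in> V"
  shows "\<exists>f. WIASI V (KE V) f \<and> card (mono_edges (KE V) f) \<le> (card V - 1) choose 2"
proof -
  obtain g where "bij_betw g V {0..<card V}" using ex_bij_betw_finite_nat[OF V] by blast
  hence g: "inj_on g V" by (simp add: bij_betw_def)
  define f where "f v = (if v = v0 then {0,1} else {(2::nat)^(g v)})" for v
  have ss: "sumset (f u) (f v) = (if u = v0 then {2^g v, Suc (2^g v)} else if v = v0 then {2^g u, Suc (2^g u)} else {2^g u + 2^g v})"
    if "u \<noteq> v" for u v
    using that unfolding f_def by (auto simp add: sumset_01s sumset_sing)
  have c01: "card {0::nat, 1} = 2" by simp
  have cp: "\<And>p::nat. card {p, Suc p} = 2" by simp
  have inj: "inj_on f V"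
  proof (rule inj_onI)
    fix x y assume "x \<in> V" "y \<in> V" "f x = f y"
    thus "x = y" unfolding f_def using g
      by (auto split: if_splits simp: doubleton_eq_iff dest: inj_onD)
  qed
  have I: "IASI V (KE V) f" unfolding IASI_def
  proof (intro conjI inj ballI allI impI)
    fix v show "finite (f v)" "f v \<noteq> {}" unfolding f_def by auto
  next
    fix u v x y assume e1: "{u, v} \<in> KE V" and e2: "{x, y} \<in> KE V"
      and eq: "sumset (f u) (f v) = sumset (f x) (f y)"
    have m: "u \<in> V" "v \<in> V" "u \<noteq> v" "x \<in> V" "y \<in> V" "x \<noteq> y" using e1 e2 by (simp_all add: KE_mem)
    have pinj: "a = b" if "(2::nat)^(g a) = 2^(g b)" "a \<in> V" "b \<in> V" for a b
    proof -
      have "g a = g b" using that(1) by simp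
      thus ?thesis using g that(2,3) by (simp add: inj_on_eq_iff)
    qed
    have d: "\<And>p q::nat. {p, Suc p} = {q, Suc q} \<Longrightarrow> p = q" by (auto simp: doubleton_eq_iff)
    have d2: "\<And>p q::nat. {p} \<noteq> {q, Suc q}" by (auto simp: doubleton_eq_iff)
    have cl: "(\<exists>w\<in>V. {a,b} = {v0,w} \<and> sumset (f a) (f b) = {2^g w, Suc (2^g w)})
       \<or> (a \<noteq> v0 \<and> b \<noteq> v0 \<and> sumset (f a) (f b) = {2^g a + 2^g b})"
      if "a \<in> V" "b \<in> V" "a \<noteq> b" for a b
    proof (cases "a = v0")
      case True thus ?thesis using that ss[OF that(3)] by auto
    next
      case False
      show ?thesis
      proof (cases "b = v0")
        case True thus ?thesis using that ss[OF that(3)] False by (auto simp: insert_commute)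
      next
        case F2: False thus ?thesis using that ss[OF that(3)] False by auto
      qed
    qed
    show "{u, v} = {x, y}"
      using cl[OF m(1-3)]
    proof
      assume "\<exists>w\<in>V. {u,v} = {v0,w} \<and> sumset (f u) (f v) = {2^g w, Suc (2^g w)}"
      then obtain w where w: "w \<in> V" "{u,v} = {v0,w}" "sumset (f u) (f v) = {2^g w, Suc (2^g w)}" by blast
      show ?thesis using cl[OF m(4-6)]
      proof
        assume "\<exists>w\<in>V. {x,y} = {v0,w} \<and> sumset (f x) (f y) = {2^g w, Suc (2^g w)}"
        then obtain w' where w': "w' \<in> V" "{x,y} = {v0,w'}" "sumset (f x) (f y) = {2^g w', Suc (2^g w')}" by blast
        have "(2::nat)^g w = 2^g w'" using d w(3) w'(3) eq by metis
        hence "w = w'" using pinj w(1) w'(1) by blast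
        thus ?thesis using w(2) w'(2) by simp
      next
        assume "x \<noteq> v0 \<and> y \<noteq> v0 \<and> sumset (f x) (f y) = {2^g x + 2^g y}"
        thus ?thesis using d2 w(3) eq by metis
      qed
    next
      assume h: "u \<noteq> v0 \<and> v \<noteq> v0 \<and> sumset (f u) (f v) = {2^g u + 2^g v}"
      show ?thesis using cl[OF m(4-6)]
      proof
        assume "\<exists>w\<in>V. {x,y} = {v0,w} \<and> sumset (f x) (f y) = {2^g w, Suc (2^g w)}"
        then obtain w' where w': "w' \<in> V" "{x,y} = {v0,w'}" "sumset (f x) (f y) = {2^g w', Suc (2^g w')}" by blast
        thus ?thesis using d2 h eq by metis
      next
        assume h2: "x \<noteq> v0 \<and> y \<noteq> v0 \<and> sumset (f x) (f y) = {2^g x + 2^g y}"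
        have "(2::nat)^g u + 2^g v = 2^g x + 2^g y" using h h2 eq by simp
        thus ?thesis using key_inj[OF g m(1,2,4,5,3,6)] by blast
      qed
    qed
  qed
  have Wk: "card (sumset (f u) (f v)) = max (card (f u)) (card (f v))" if "{u, v} \<in> KE V" for u v
  proof -
    have "u \<noteq> v" using that by (simp add: KE_mem)
    thus ?thesis using ss[of u v] unfolding f_def by (auto simp: c01 cp)
  qed
  have W: "WIASI V (KE V) f" unfolding WIASI_def using I Wk by blast
  have sub: "mono_edges (KE V) f \<subseteq> {B. B \<subseteq> V - {v0} \<and> card B = 2}"
  proof
    fix e assume "e \<in> mono_edges (KE V) f"
    then obtain u v where e: "e \<in> KE V" "e = {u,v}" "card (sumset (f u) (f v)) = 1"
      unfolding mono_edges_def by blast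
    have m: "u \<in> V" "v \<in> V" "u \<noteq> v" using e(1,2) by (simp_all add: KE_mem)
    have "u \<noteq> v0" "v \<noteq> v0" using e(3) ss[OF m(3)] cp by (auto split: if_splits)
    thus "e \<in> {B. B \<subseteq> V - {v0} \<and> card B = 2}" using m e by auto
  qed
  have "card (mono_edges (KE V) f) \<le> card {B. B \<subseteq> V - {v0} \<and> card B = 2}"
    using sub V by (intro card_mono) auto
  also have "\<dots> = (card V - 1) choose 2" using n_subsets[of "V - {v0}" 2] V v0 by simp
  finally show ?thesis using W by blast
qed

lemma choose2_real: "real (m choose 2) = real m * (real m - 1) / 2"
proof (induction m)
  case 0 thus ?case by simp
next
  case (Suc m)
  have "Suc m choose 2 = m + (m choose 2)"
    using binomial_Suc_Suc[of m 1] by (simp add: numeral_2_eq_2)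
  hence "real (Suc m choose 2) = real m + real (m choose 2)" by simp
  thus ?case using Suc by (simp add: field_simps)
qed

theorem mainTheorem7:
  fixes V :: "'a set" and E :: "'a set set" and K I :: "'a set" and r s t :: nat
  assumes "graph V E"
    and "connected_graph V E"
    and "is_split_partition V E K I"
    and "card K = r" and "card I = s"
    and "t \<ge> 3"
  shows "real (sparing_number V (graph_power V E t))
           = (real r + real s - 1) * (real r + real s - 2) / 2"
proof -
  have V: "finite V" using assms(1) unfolding graph_def by blast
  have Vne: "V \<noteq> {}" using assms(2) unfolding connected_graph_def by blast
  then obtain v0 where v0: "v0 \<in> V" by blast
  have P: "K \<union> I = V" "K \<inter> I = {}" using assms(3) unfolding is_split_partition_def by auto
  have fK: "finite K" "finite I" using V P(1) finite_subset by blast+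
  have n: "card V = r + s" using card_Un_disjoint[OF fK P(2)] P(1) assms(4,5) by simp
  have n1: "card V \<ge> 1" using V Vne by (simp add: Suc_le_eq card_gt_0_iff)
  have G: "graph_power V E t = KE V" using power_complete[OF assms(1,3,6)] .
  have SN: "sparing_number V (KE V) = (card V - 1) choose 2"
    unfolding sparing_number_def
  proof (rule Least_equality)
    obtain f where f: "WIASI V (KE V) f" "card (mono_edges (KE V) f) \<le> (card V - 1) choose 2"
      using construct[OF V v0] by blast
    have "card (mono_edges (KE V) f) = (card V - 1) choose 2" using f lower[OF V f(1)] by linarith
    thus "\<exists>f. WIASI V (KE V) f \<and> card (mono_edges (KE V) f) = (card V - 1) choose 2"
      using f(1) by blast
  next
    fix m assume "\<exists>f. WIASI V (KE V) f \<and> card (mono_edges (KE V) f) = m"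
    thus "(card V - 1) choose 2 \<le> m" using lower[OF V] by blast
  qed
  have "real (sparing_number V (graph_power V E t)) = real ((card V - 1) choose 2)" using G SN by simp
  also have "\<dots> = real (card V - 1) * (real (card V - 1) - 1) / 2" by (rule choose2_real)
  also have "\<dots> = (real r + real s - 1) * (real r + real s - 2) / 2" using n n1 by (simp add: of_nat_diff)
  finally show ?thesis .
qed

end
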